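(* Let $q\ge2$, $G\in\mathbb G^q$, $S=\Psi(G)$, and let $i\neq j$ in $\{1,\dots,q\}$. Let $S_{ij}$ be the subgraph of $S$ consisting of all edges of colors $i$ and $j$ together with their endpoints. If $S_{ij}$ is a forest, then for every color-$0$ edge of $G$, its two endpoints belong to the same color-$ij$ cycle of $G$ (i.e. the same connected component of the subgraph of $G$ formed by the edges of colors $i$ and $j$).
   Context: Fix an integer $q\ge 2$. A $(q+1)$-edge-colored graph (colored graph) is a finite connected graph, multiple edges allowed and no loops, whose edges carry colors in $\{0,1,\dots,q\}$ such that every vertex is incident to exactly one edge of each color. It is rooted if one color-0 edge is distinguished and oriented; it is bipartite if its vertices can be colored black and white so that every edge joins a black and a white vertex, with the convention that the origin of the root edge is black. $\mathbb G^q$ denotes the set of rooted bipartite colored graphs. Constellations: given $G\in\mathbb G^q$, its constellation $S=\Psi(G)$ is obtained as follows: orient every edge from its black to its white endpoint; contract every color-0 edge into a single vertex, called a white vertex of $S$. For each $i\in\{1,\dots,q\}$ the color-$i$ edges now form directed cycles; for each such cycle, passing through white vertices $w_1,\dots,w_p$ in this cyclic order, add a new vertex of color $i$ joined by one color-$i$ edge to each $w_k$, equip the new vertex with the cyclic order $(w_1,\dots,w_p)$ of its incident edges, and delete the original color-$i$ edges of the cycle. *)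

theory Defs
  imports Main
begin

text \<open>A (q+1)-edge-colored multigraph: vertex set, edge set (edges are objects, so
multiple edges are allowed), endpoint map, colour map, plus a root edge and the origin
of its orientation.\<close>

record ('v, 'e) cgraph =
  gV    :: "'v set"
  gE    :: "'e set"
  gends :: "'e \<Rightarrow> 'v set"
  gcol  :: "'e \<Rightarrow> nat"
  groot :: "'e"
  gorig :: "'v"

definition adj_rel :: "('v, 'e) cgraph \<Rightarrow> nat set \<Rightarrow> ('v \<times> 'v) set" where
  "adj_rel G C = {(u, v). \<exists>e\<in>gE G. gcol G e \<in> C \<and> gends G e = {u, v}}"

definition colored_graph :: "nat \<Rightarrow> ('v, 'e) cgraph \<Rightarrow> bool" where
  "colored_graph q G \<longleftrightarrow>
     finite (gV G) \<and> finite (gE G) \<and> gV G \<noteq> {} \<and>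
     (\<forall>e\<in>gE G. gends G e \<subseteq> gV G \<and> card (gends G e) = 2 \<and> gcol G e \<le> q) \<and>
     (\<forall>v\<in>gV G. \<forall>c\<le>q. \<exists>!e. e \<in> gE G \<and> v \<in> gends G e \<and> gcol G e = c) \<and>
     (\<forall>u\<in>gV G. \<forall>v\<in>gV G. (u, v) \<in> (adj_rel G {0..q})\<^sup>*)"

text \<open>Membership in \<open>\<G>^q\<close>: rooted bipartite colored graph; \<open>black\<close> is the black/white
colouring with the origin of the root edge black.\<close>

definition rooted_bipartite :: "nat \<Rightarrow> ('v, 'e) cgraph \<Rightarrow> ('v \<Rightarrow> bool) \<Rightarrow> bool" where
  "rooted_bipartite q G black \<longleftrightarrow>
     colored_graph q G \<and>
     groot G \<in> gE G \<and> gcol G (groot G) = 0 \<and> gorig G \<in> gends G (groot G) \<and>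
     (\<forall>e\<in>gE G. \<exists>b w. gends G e = {b, w} \<and> black b \<and> \<not> black w) \<and>
     black (gorig G)"

definition black_end :: "('v, 'e) cgraph \<Rightarrow> ('v \<Rightarrow> bool) \<Rightarrow> 'e \<Rightarrow> 'v" where
  "black_end G black e = (THE v. v \<in> gends G e \<and> black v)"

definition white_end :: "('v, 'e) cgraph \<Rightarrow> ('v \<Rightarrow> bool) \<Rightarrow> 'e \<Rightarrow> 'v" where
  "white_end G black e = (THE v. v \<in> gends G e \<and> \<not> black v)"

definition zero_edge :: "('v, 'e) cgraph \<Rightarrow> 'v \<Rightarrow> 'e" where
  "zero_edge G v = (THE f. f \<in> gE G \<and> v \<in> gends G f \<and> gcol G f = 0)"

text \<open>After contracting colour-0 edges (white vertices of the constellation = colour-0 edges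
of G), a colour-c edge e, oriented black to white, becomes an arc between white vertices.\<close>

definition contr_arcs :: "('v, 'e) cgraph \<Rightarrow> ('v \<Rightarrow> bool) \<Rightarrow> nat \<Rightarrow> ('e \<times> 'e) set" where
  "contr_arcs G black c =
     {(zero_edge G (black_end G black e), zero_edge G (white_end G black e)) | e.
        e \<in> gE G \<and> gcol G e = c}"

text \<open>The directed colour-c cycle through the white vertex f (as its vertex set).\<close>

definition contr_cycle :: "('v, 'e) cgraph \<Rightarrow> ('v \<Rightarrow> bool) \<Rightarrow> nat \<Rightarrow> 'e \<Rightarrow> 'e set" where
  "contr_cycle G black c f = {g. (f, g) \<in> (contr_arcs G black c)\<^sup>*}"

text \<open>Vertices: \<open>Inl f\<close> for white vertices (colour-0 edges f),
\<open>Inr (c, C)\<close> for the new vertex of colour c attached to the colour-c cycle C.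
Edges: the new vertex of a colour-c cycle through \<open>w\<^sub>1,\<dots>,w\<^sub>p\<close> gets one edge to each \<open>w\<^sub>k\<close>; we
index the edge to \<open>w\<^sub>k\<close> by the colour-c edge of G leaving \<open>w\<^sub>k\<close> (a bijection).  The edge
colour is that of the indexing edge.  (The cyclic orders are not needed here.)\<close>

definition psi_verts :: "nat \<Rightarrow> ('v, 'e) cgraph \<Rightarrow> ('v \<Rightarrow> bool) \<Rightarrow> ('e + nat \<times> 'e set) set" where
  "psi_verts q G black =
     Inl ` {f \<in> gE G. gcol G f = 0} \<union>
     {Inr (c, contr_cycle G black c f) | c f. 1 \<le> c \<and> c \<le> q \<and> f \<in> gE G \<and> gcol G f = 0}"

definition psi_edges :: "nat \<Rightarrow> ('v, 'e) cgraph \<Rightarrow> 'e set" where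
  "psi_edges q G = {e \<in> gE G. 1 \<le> gcol G e \<and> gcol G e \<le> q}"

definition psi_ends :: "('v, 'e) cgraph \<Rightarrow> ('v \<Rightarrow> bool) \<Rightarrow> 'e \<Rightarrow> ('e + nat \<times> 'e set) set" where
  "psi_ends G black e =
     (let w = zero_edge G (black_end G black e)
      in {Inl w, Inr (gcol G e, contr_cycle G black (gcol G e) w)})"

definition psi_sub_edges :: "nat \<Rightarrow> ('v, 'e) cgraph \<Rightarrow> nat \<Rightarrow> nat \<Rightarrow> 'e set" where
  "psi_sub_edges q G i j = {e \<in> psi_edges q G. gcol G e = i \<or> gcol G e = j}"

text \<open>Cycles and forests in a multigraph given by an edge set and an endpoint map
(a cycle of length 2 consists of two parallel edges; length 1 would be a loop).\<close>

definition has_cycle :: "'e set \<Rightarrow> ('e \<Rightarrow> 'a set) \<Rightarrow> bool" where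
  "has_cycle Es ends \<longleftrightarrow>
     (\<exists>es vs. length es = length vs \<and> length es \<ge> 1 \<and> distinct es \<and> distinct vs \<and>
        set es \<subseteq> Es \<and>
        (\<forall>k < length es. ends (es ! k) = {vs ! k, vs ! ((k + 1) mod length es)}))"

definition is_forest :: "'e set \<Rightarrow> ('e \<Rightarrow> 'a set) \<Rightarrow> bool" where
  "is_forest Es ends \<longleftrightarrow> \<not> has_cycle Es ends"

end

theory Submission
  imports Defs
begin


lemma walk_cycle:
  fixes x :: "nat \<Rightarrow> 'a" and e :: "nat \<Rightarrow> 'e"
  assumes "\<forall>k<n. e k \<in> Es \<and> ends (e k) = {x k, x (Suc k mod n)}"
    and "\<forall>k. 0 < k \<and> k < n \<longrightarrow> x k \<noteq> x 0"
    and "e 0 \<noteq> e (n - 1)"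
  shows "has_cycle Es ends"
  using assms
proof (induction n arbitrary: x e rule: less_induct)
  case (less n)
  note H = less.prems
  have n2: "n \<ge> 2"
  proof (rule ccontr)
    assume "\<not> n \<ge> 2" then have "n - 1 = 0" by simp
    with H(3) show False by simp
  qed
  show ?case
  proof (cases "inj_on x {..<n}")
    case True
    have ne: "\<forall>k l. k < l \<and> l < n \<longrightarrow> e k \<noteq> e l"
    proof (intro allI impI)
      fix k l assume kl: "k < l \<and> l < n"
      show "e k \<noteq> e l"
      proof
        assume eq: "e k = e l"
        have kn: "k < n" using kl by simp
        have E: "{x k, x (Suc k mod n)} = {x l, x (Suc l mod n)}"
        proof -
          have "ends (e k) = {x k, x (Suc k mod n)}" using H(1) kn by blast
          moreover have "ends (e l) = {x l, x (Suc l mod n)}" using H(1) kl by blast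
          ultimately show ?thesis using eq by simp
        qed
        have xkl: "x k \<noteq> x l" using inj_on_contraD[OF True, of k l] kl by simp
        have sk: "Suc k mod n = Suc k" using kl by simp
        have a1: "x k = x (Suc l mod n)" and a2: "x l = x (Suc k mod n)" using E xkl by (auto simp: doubleton_eq_iff)
        have "l = Suc k" using a2 sk inj_onD[OF True, of l "Suc k"] kl by simp
        moreover have "k = Suc l mod n" using a1 inj_onD[OF True, of k "Suc l mod n"] kn n2 by simp
        ultimately have "Suc l = n"
        proof -
          assume h1: "l = Suc k" and h2: "k = Suc l mod n"
          show "Suc l = n"
          proof (rule ccontr)
            assume "Suc l \<noteq> n" then have "Suc l < n" using kl by simp
            then have "k = Suc l" using h2 by simp
            with h1 show False by simp
          qed
        qed
        then have "k = 0" using \<open>k = Suc l mod n\<close> by simp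
        then have "l = 1" "n = 2" using \<open>l = Suc k\<close> \<open>Suc l = n\<close> by simp_all
        then show False using H(3) eq \<open>k = 0\<close> by simp
      qed
    qed
    show ?thesis unfolding has_cycle_def
    proof (intro exI conjI)
      show "length (map e [0..<n]) = length (map x [0..<n])" by simp
      show "1 \<le> length (map e [0..<n])" using n2 by simp
      show "distinct (map x [0..<n])" using True by (simp add: distinct_map lessThan_atLeast0)
      have "inj_on e {0..<n}"
        unfolding inj_on_def by (metis atLeastLessThan_iff ne nat_neq_iff)
      then show "distinct (map e [0..<n])"
        by (simp add: distinct_map)
      show "set (map e [0..<n]) \<subseteq> Es" using H(1) by auto
      show "\<forall>k<length (map e [0..<n]). ends (map e [0..<n] ! k) =
        {map x [0..<n] ! k, map x [0..<n] ! ((k + 1) mod length (map e [0..<n]))}"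
        using H(1) n2 by auto
    qed
  next
    case False
    then obtain a0 b0 where h: "a0 < n" "b0 < n" "x a0 = x b0" "a0 \<noteq> b0"
      unfolding inj_on_def by auto
    obtain a b where ab: "a < b" "b < n" "x a = x b"
    proof (cases "a0 < b0")
      case True then show ?thesis using that h by blast
    next
      case False then have "b0 < a0" using h(4) by simp
      then show ?thesis using that[of b0 a0] h by simp
    qed
    have a0: "0 < a"
    proof (rule ccontr)
      assume "\<not> 0 < a" then have "a = 0" by simp
      then show False using ab H(2) by auto
    qed
    define d where "d = b - a"
    define n' where "n' = n - d"
    define x' where "x' k = (if k < a then x k else x (k + d))" for k
    define e' where "e' k = (if k < a then e k else e (k + d))" for k
    have d0: "0 < d" using ab d_def by simp
    have n'n: "n' < n" using d0 ab n'_def d_def by simp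
    have an': "a < n'" using ab n'_def d_def by simp
    show ?thesis
    proof (rule less.IH[OF n'n, of e' x'])
      show "\<forall>k<n'. e' k \<in> Es \<and> ends (e' k) = {x' k, x' (Suc k mod n')}"
      proof (intro allI impI)
        fix k assume k: "k < n'"
        show "e' k \<in> Es \<and> ends (e' k) = {x' k, x' (Suc k mod n')}"
        proof (cases "Suc k < a")
          case True
          then show ?thesis using H(1) k an' ab by (simp add: e'_def x'_def)
        next
          case F1: False
          show ?thesis
          proof (cases "k < a")
            case True
            then have "Suc k = a" using F1 by simp
            then show ?thesis using H(1) k an' ab True by (simp add: e'_def x'_def d_def)
          next
            case F2: False
            have kd: "k + d < n" using k n'_def d_def ab by simp
            show ?thesis
            proof (cases "Suc k < n'")
              case True
              then have "Suc (k + d) < n" using n'_def d_def ab by simp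
              then show ?thesis using H(1) kd True F2 by (simp add: e'_def x'_def)
            next
              case False
              then have "Suc k = n'" using k by simp
              then have "Suc (k + d) = n" using n'_def d_def ab by simp
              then show ?thesis using H(1) kd F2 a0 \<open>Suc k = n'\<close> by (simp add: e'_def x'_def)
            qed
          qed
        qed
      qed
      show "\<forall>k. 0 < k \<and> k < n' \<longrightarrow> x' k \<noteq> x' 0"
        using H(2) a0 n'_def d_def ab by (auto simp: x'_def)
      have "n' - 1 + d = n - 1" using n'_def d_def ab by simp
      then show "e' 0 \<noteq> e' (n' - 1)"
        using H(3) a0 an' by (simp add: e'_def)
    qed
  qed
qed



lemma funpow_in: "\<forall>x\<in>A. s x \<in> A \<Longrightarrow> x \<in> A \<Longrightarrow> (s ^^ n) x \<in> A"
  by (induction n) auto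

lemma funpow_inj: "inj_on s A \<Longrightarrow> \<forall>x\<in>A. s x \<in> A \<Longrightarrow> inj_on (s ^^ n) A"
proof (induction n)
  case 0 then show ?case by simp
next
  case (Suc n)
  have "(s ^^ n) ` A \<subseteq> A" using funpow_in[OF Suc.prems(2)] by auto
  then have "inj_on s ((s ^^ n) ` A)" using Suc.prems(1) inj_on_subset by blast
  then have "inj_on (s \<circ> (s ^^ n)) A" using Suc comp_inj_on by blast
  then show ?case by (simp add: comp_def)
qed

lemma period:
  assumes "finite A" "\<forall>x\<in>A. s x \<in> A" "inj_on s A" "x \<in> A"
  shows "\<exists>n>0. (s ^^ n) x = x"
proof -
  define g where "g n = (s ^^ n) x" for n
  have gA: "g ` {0..card A} \<subseteq> A" using funpow_in[OF assms(2,4)] g_def by auto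
  have "\<not> inj_on g {0..card A}"
  proof
    assume "inj_on g {0..card A}"
    then have "card {0..card A} \<le> card A" using card_inj_on_le[OF _ gA assms(1)] by blast
    then show False by simp
  qed
  then obtain a0 b0 where h: "a0 \<le> card A" "b0 \<le> card A" "g a0 = g b0" "a0 \<noteq> b0"
    unfolding inj_on_def by auto
  obtain a b where ab: "a < b" "g a = g b"
  proof (cases "a0 < b0")
    case True then show ?thesis using that h by blast
  next
    case False then have "b0 < a0" using h(4) by simp
    then show ?thesis using that[of b0 a0] h by simp
  qed
  have "(s ^^ a) ((s ^^ (b - a)) x) = (s ^^ (a + (b - a))) x" by (simp add: funpow_add)
  also have "\<dots> = (s ^^ b) x" using ab(1) by simp
  also have "\<dots> = (s ^^ a) x" using ab(2) g_def by simp
  finally have eq: "(s ^^ a) ((s ^^ (b - a)) x) = (s ^^ a) x" .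
  have h1: "(s ^^ (b - a)) x \<in> A" using funpow_in[OF assms(2,4)] .
  have "(s ^^ (b - a)) x = x"
    using inj_onD[OF funpow_inj[OF assms(3,2)] eq h1 assms(4)] .
  moreover have "b - a > 0" using ab by simp
  ultimately show ?thesis by blast
qed

lemma perm_back:
  assumes "finite A" "\<forall>x\<in>A. s x \<in> A" "inj_on s A" "x \<in> A"
    and "\<forall>y\<in>A. (y, s y) \<in> R"
  shows "(s x, x) \<in> R\<^sup>*"
proof -
  obtain n where n: "n > 0" "(s ^^ n) x = x" using period[OF assms(1-4)] by blast
  have sx: "s x \<in> A" using assms by simp
  have key: "(s x, (s ^^ m) (s x)) \<in> R\<^sup>*" for m
  proof (induction m)
    case 0 then show ?case by simp
  next
    case (Suc m)
    have "(s ^^ m) (s x) \<in> A" using funpow_in[OF assms(2) sx] .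
    then have "((s ^^ m) (s x), s ((s ^^ m) (s x))) \<in> R" using assms(5) by blast
    then show ?case using Suc by (simp add: rtrancl_into_rtrancl)
  qed
  have "n = Suc (n - 1)" using n by simp
  then have "(s ^^ n) x = (s ^^ (n - 1)) (s x)"
    by (metis comp_apply funpow_Suc_right)
  with key[of "n - 1"] show ?thesis using n by simp
qed



definition cedge :: "('v, 'e) cgraph \<Rightarrow> nat \<Rightarrow> 'v \<Rightarrow> 'e" where
  "cedge G c v = (THE e. e \<in> gE G \<and> v \<in> gends G e \<and> gcol G e = c)"

lemma zero_edge_cedge: "zero_edge G v = cedge G 0 v"
  by (simp add: zero_edge_def cedge_def)

context
  fixes q :: nat and G :: "('v, 'e) cgraph" and black :: "'v \<Rightarrow> bool"
  assumes RB: "rooted_bipartite q G black"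
begin

lemma CG: "colored_graph q G" using RB by (simp add: rooted_bipartite_def)

lemma fin: "finite (gV G)" "finite (gE G)" using CG by (simp_all add: colored_graph_def)

lemma eprops: "e \<in> gE G \<Longrightarrow> gends G e \<subseteq> gV G \<and> card (gends G e) = 2 \<and> gcol G e \<le> q"
  using CG by (simp add: colored_graph_def)

lemma uniq: "v \<in> gV G \<Longrightarrow> c \<le> q \<Longrightarrow> \<exists>!e. e \<in> gE G \<and> v \<in> gends G e \<and> gcol G e = c"
  using CG by (simp add: colored_graph_def)

lemma bip: "e \<in> gE G \<Longrightarrow> \<exists>b w. gends G e = {b, w} \<and> black b \<and> \<not> black w"
  using RB by (simp add: rooted_bipartite_def)

lemma cedge: "v \<in> gV G \<Longrightarrow> c \<le> q \<Longrightarrow>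
  cedge G c v \<in> gE G \<and> v \<in> gends G (cedge G c v) \<and> gcol G (cedge G c v) = c"
  unfolding cedge_def by (rule theI'[OF uniq])

lemma cedge_eq: "e \<in> gE G \<Longrightarrow> v \<in> gends G e \<Longrightarrow> gcol G e = c \<Longrightarrow> cedge G c v = e"
proof -
  assume a: "e \<in> gE G" "v \<in> gends G e" "gcol G e = c"
  have "v \<in> gV G" "c \<le> q" using eprops[OF a(1)] a by auto
  then show ?thesis unfolding cedge_def using a by (intro the1_equality[OF uniq]) auto
qed

lemma be: "e \<in> gE G \<Longrightarrow> black_end G black e \<in> gends G e \<and> black (black_end G black e)"
proof -
  assume a: "e \<in> gE G"
  obtain b w where bw: "gends G e = {b, w}" "black b" "\<not> black w" using bip[OF a] by blast
  have "black_end G black e = b" unfolding black_end_def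
    by (rule the_equality) (use bw in auto)
  then show ?thesis using bw by simp
qed

lemma we: "e \<in> gE G \<Longrightarrow> white_end G black e \<in> gends G e \<and> \<not> black (white_end G black e)"
proof -
  assume a: "e \<in> gE G"
  obtain b w where bw: "gends G e = {b, w}" "black b" "\<not> black w" using bip[OF a] by blast
  have "white_end G black e = w" unfolding white_end_def
    by (rule the_equality) (use bw in auto)
  then show ?thesis using bw by simp
qed

lemma ends_bw: "e \<in> gE G \<Longrightarrow> gends G e = {black_end G black e, white_end G black e}"
proof -
  assume a: "e \<in> gE G"
  obtain b w where bw: "gends G e = {b, w}" "black b" "\<not> black w" using bip[OF a] by blast
  have "black_end G black e = b" unfolding black_end_def
    by (rule the_equality) (use bw in auto)
  moreover have "white_end G black e = w" unfolding white_end_def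
    by (rule the_equality) (use bw in auto)
  ultimately show ?thesis using bw by simp
qed

lemma be_eq: "e \<in> gE G \<Longrightarrow> v \<in> gends G e \<Longrightarrow> black v \<Longrightarrow> black_end G black e = v"
proof -
  assume a: "e \<in> gE G" "v \<in> gends G e" "black v"
  then show ?thesis using ends_bw[OF a(1)] we[OF a(1)] by auto
qed

lemma we_eq: "e \<in> gE G \<Longrightarrow> v \<in> gends G e \<Longrightarrow> \<not> black v \<Longrightarrow> white_end G black e = v"
proof -
  assume a: "e \<in> gE G" "v \<in> gends G e" "\<not> black v"
  then show ?thesis using ends_bw[OF a(1)] be[OF a(1)] by auto
qed

lemma ends_V: "e \<in> gE G \<Longrightarrow> v \<in> gends G e \<Longrightarrow> v \<in> gV G"
  using eprops by blast

definition sig :: "nat \<Rightarrow> 'e \<Rightarrow> 'e" where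
  "sig c f = zero_edge G (white_end G black (cedge G c (black_end G black f)))"

definition A0 where "A0 = {f \<in> gE G. gcol G f = 0}"

lemma Z: "v \<in> gV G \<Longrightarrow> zero_edge G v \<in> A0 \<and> v \<in> gends G (zero_edge G v)"
  using cedge[of v 0] by (simp add: zero_edge_cedge A0_def)

lemma Z_eq: "f \<in> A0 \<Longrightarrow> v \<in> gends G f \<Longrightarrow> zero_edge G v = f"
  unfolding zero_edge_cedge A0_def by (auto intro: cedge_eq)

lemma sig_A0: "c \<le> q \<Longrightarrow> f \<in> A0 \<Longrightarrow> sig c f \<in> A0"
proof -
  assume c: "c \<le> q" and f: "f \<in> A0"
  have "black_end G black f \<in> gV G" using be[of f] f ends_V by (auto simp: A0_def)
  then have "cedge G c (black_end G black f) \<in> gE G" using cedge c by blast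
  then have "white_end G black (cedge G c (black_end G black f)) \<in> gV G" using we ends_V by blast
  then show ?thesis unfolding sig_def using Z by blast
qed

lemma arcs_char: "(x, y) \<in> contr_arcs G black c \<Longrightarrow> x \<in> A0 \<and> y = sig c x"
proof -
  assume "(x, y) \<in> contr_arcs G black c"
  then obtain e where e: "x = zero_edge G (black_end G black e)" "y = zero_edge G (white_end G black e)"
    "e \<in> gE G" "gcol G e = c" unfolding contr_arcs_def by blast
  have bV: "black_end G black e \<in> gV G" using be[OF e(3)] ends_V[OF e(3)] by blast
  have x: "x \<in> A0" "black_end G black e \<in> gends G x" using Z[OF bV] e(1) by auto
  have "black_end G black x = black_end G black e"
    using be_eq[of x "black_end G black e"] x be[OF e(3)] by (auto simp: A0_def)
  moreover have "cedge G c (black_end G black e) = e" using cedge_eq e(3,4) be[OF e(3)] by blast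
  ultimately show ?thesis using x e(2) by (simp add: sig_def)
qed

lemma arcs_in: "c \<le> q \<Longrightarrow> x \<in> A0 \<Longrightarrow> (x, sig c x) \<in> contr_arcs G black c"
proof -
  assume c: "c \<le> q" and x: "x \<in> A0"
  define b where "b = black_end G black x"
  define e where "e = cedge G c b"
  have xE: "x \<in> gE G" using x by (simp add: A0_def)
  have b: "b \<in> gends G x" "black b" using be[OF xE] b_def by auto
  have bV: "b \<in> gV G" using ends_V[OF xE b(1)] .
  have e: "e \<in> gE G" "b \<in> gends G e" "gcol G e = c" using cedge[OF bV c] e_def by auto
  have "black_end G black e = b" using be_eq[OF e(1,2) b(2)] .
  moreover have "zero_edge G b = x" using Z_eq[OF x b(1)] .
  ultimately have "x = zero_edge G (black_end G black e)" by simp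
  moreover have "sig c x = zero_edge G (white_end G black e)" by (simp add: sig_def e_def b_def)
  ultimately show ?thesis unfolding contr_arcs_def using e by blast
qed

lemma sig_inj: "c \<le> q \<Longrightarrow> inj_on (sig c) A0"
proof (rule inj_onI)
  fix f0 f1 assume c: "c \<le> q" and f: "f0 \<in> A0" "f1 \<in> A0" and eq: "sig c f0 = sig c f1"
  define e0 where "e0 = cedge G c (black_end G black f0)"
  define e1 where "e1 = cedge G c (black_end G black f1)"
  have f0E: "f0 \<in> gE G" and f1E: "f1 \<in> gE G" using f by (auto simp: A0_def)
  have b0: "black_end G black f0 \<in> gV G" using be[OF f0E] ends_V[OF f0E] by blast
  have b1: "black_end G black f1 \<in> gV G" using be[OF f1E] ends_V[OF f1E] by blast
  have e0: "e0 \<in> gE G" "black_end G black f0 \<in> gends G e0" "gcol G e0 = c" using cedge[OF b0 c] e0_def by auto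
  have e1: "e1 \<in> gE G" "black_end G black f1 \<in> gends G e1" "gcol G e1 = c" using cedge[OF b1 c] e1_def by auto
  define u0 where "u0 = white_end G black e0"
  define u1 where "u1 = white_end G black e1"
  have u0: "u0 \<in> gends G e0" "\<not> black u0" using we[OF e0(1)] u0_def by auto
  have u1: "u1 \<in> gends G e1" "\<not> black u1" using we[OF e1(1)] u1_def by auto
  have u0V: "u0 \<in> gV G" using ends_V[OF e0(1) u0(1)] .
  have u1V: "u1 \<in> gV G" using ends_V[OF e1(1) u1(1)] .
  have zz: "zero_edge G u0 = zero_edge G u1" using eq by (simp add: sig_def u0_def u1_def e0_def e1_def)
  have Zu0: "zero_edge G u0 \<in> A0" "u0 \<in> gends G (zero_edge G u0)" using Z[OF u0V] by auto
  have Zu1: "u1 \<in> gends G (zero_edge G u0)" using Z[OF u1V] zz by auto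
  have ZE: "zero_edge G u0 \<in> gE G" using Zu0 by (simp add: A0_def)
  have "u0 = u1" using we_eq[OF ZE Zu0(2) u0(2)] we_eq[OF ZE Zu1 u1(2)] by simp
  then have "e0 = e1" using cedge_eq[OF e0(1) u0(1) e0(3)] cedge_eq[OF e1(1) u1(1) e1(3)] by simp
  moreover have "black_end G black e0 = black_end G black f0" using be_eq[OF e0(1) e0(2)] be[OF f0E] by simp
  moreover have "black_end G black e1 = black_end G black f1" using be_eq[OF e1(1) e1(2)] be[OF f1E] by simp
  ultimately have bb: "black_end G black f0 = black_end G black f1" by simp
  have "f0 = zero_edge G (black_end G black f0)" using Z_eq[OF f(1)] be[OF f0E] by simp
  also have "\<dots> = zero_edge G (black_end G black f1)" using bb by simp
  also have "\<dots> = f1" using Z_eq[OF f(2)] be[OF f1E] by simp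
  finally show "f0 = f1" .
qed

lemma fin_A0: "finite A0" using fin(2) by (simp add: A0_def)

lemma cyc_eq: "c \<le> q \<Longrightarrow> (x, y) \<in> contr_arcs G black c \<Longrightarrow>
  contr_cycle G black c x = contr_cycle G black c y"
proof -
  assume c: "c \<le> q" and xy: "(x, y) \<in> contr_arcs G black c"
  have x: "x \<in> A0" and y: "y = sig c x" using arcs_char[OF xy] by auto
  have "(sig c x, x) \<in> (contr_arcs G black c)\<^sup>*"
    by (rule perm_back[OF fin_A0 _ sig_inj[OF c] x]) (use sig_A0[OF c] arcs_in[OF c] in auto)
  then have yx: "(y, x) \<in> (contr_arcs G black c)\<^sup>*" using y by simp
  show ?thesis unfolding contr_cycle_def
  proof (intro equalityI subsetI CollectI)
    fix g assume "g \<in> {g. (x, g) \<in> (contr_arcs G black c)\<^sup>*}"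
    then have "(x, g) \<in> (contr_arcs G black c)\<^sup>*" by simp
    then show "(y, g) \<in> (contr_arcs G black c)\<^sup>*" using yx by (rule rtrancl_trans[rotated])
  next
    fix g assume "g \<in> {g. (y, g) \<in> (contr_arcs G black c)\<^sup>*}"
    then have "(y, g) \<in> (contr_arcs G black c)\<^sup>*" by simp
    then show "(x, g) \<in> (contr_arcs G black c)\<^sup>*" using xy by (rule converse_rtrancl_into_rtrancl[rotated])
  qed
qed

end



lemma adjI: "e \<in> gE G \<Longrightarrow> gcol G e \<in> C \<Longrightarrow> gends G e = {u, v} \<Longrightarrow> (u, v) \<in> adj_rel G C"
  unfolding adj_rel_def by blast

lemma adj_sym: "sym (adj_rel G C)"
  unfolding adj_rel_def sym_def by (auto simp: insert_commute)

lemma psi_ends_eq: "psi_ends G black g =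
  {Inl (zero_edge G (black_end G black g)),
   Inr (gcol G g, contr_cycle G black (gcol G g) (zero_edge G (black_end G black g)))}"
  by (simp add: psi_ends_def Let_def)

theorem mainTheorem18:
  fixes q i j :: nat and G :: "('v, 'e) cgraph" and black :: "'v \<Rightarrow> bool"
  assumes "q \<ge> 2"
    and "rooted_bipartite q G black"
    and "1 \<le> i" "i \<le> q" "1 \<le> j" "j \<le> q" "i \<noteq> j"
    and "is_forest (psi_sub_edges q G i j) (psi_ends G black)"
  shows "\<forall>f\<in>gE G. gcol G f = 0 \<longrightarrow>
           (\<forall>u\<in>gends G f. \<forall>v\<in>gends G f. (u, v) \<in> (adj_rel G {i, j})\<^sup>*)"
proof (intro ballI impI)
  note RB = assms(2)
  note be = be[OF RB] and we = we[OF RB] and be_eq = be_eq[OF RB] and we_eq = we_eq[OF RB]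
    and ends_bw = ends_bw[OF RB] and ends_V = ends_V[OF RB] and cedge = cedge[OF RB]
    and cedge_eq = cedge_eq[OF RB] and cyc_eq = cyc_eq[OF RB] and fin = fin[OF RB]
  have iq: "i \<le> q" and jq: "j \<le> q" using assms by auto
  fix f u v assume fE: "f \<in> gE G" and f0: "gcol G f = 0" and uv: "u \<in> gends G f" "v \<in> gends G f"
  define R where "R = adj_rel G {i, j}"
  define b where "b = black_end G black f"
  define w where "w = white_end G black f"
  have symR: "sym (R\<^sup>*)" unfolding R_def by (rule sym_rtrancl[OF adj_sym])
  have main: "(b, w) \<in> R\<^sup>*"
  proof (rule ccontr)
    assume nbw: "(b, w) \<notin> R\<^sup>*"
    define Z where "Z = zero_edge G"
    define CC where "CC = contr_cycle G black"
    define B where "B = {v \<in> gV G. black v}"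
    define tau where "tau v = black_end G black (cedge G j (white_end G black (cedge G i v)))" for v
    have Zp: "Z v \<in> gE G \<and> v \<in> gends G (Z v) \<and> gcol G (Z v) = 0" if "v \<in> gV G" for v
      using cedge[OF that, of 0] by (simp add: Z_def zero_edge_cedge)
    have Zeq: "Z v = g" if "g \<in> gE G" "v \<in> gends G g" "gcol G g = 0" for g v
      using cedge_eq[OF that] by (simp add: Z_def zero_edge_cedge)
    have fB: "b \<in> gends G f" "black b" using be[OF fE] b_def by auto
    have fW: "w \<in> gends G f" "\<not> black w" using we[OF fE] w_def by auto
    have bB: "b \<in> B" using fB ends_V[OF fE] B_def by auto
    have stepi: "cedge G i v \<in> gE G \<and> v \<in> gends G (cedge G i v) \<and> gcol G (cedge G i v) = i
       \<and> black_end G black (cedge G i v) = v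
       \<and> white_end G black (cedge G i v) \<in> gV G \<and> \<not> black (white_end G black (cedge G i v))"
      if "v \<in> B" for v
    proof -
      have v: "v \<in> gV G" "black v" using that B_def by auto
      have c: "cedge G i v \<in> gE G" "v \<in> gends G (cedge G i v)" "gcol G (cedge G i v) = i"
        using cedge[OF v(1) iq] by auto
      show ?thesis using c be_eq[OF c(1,2) v(2)] we[OF c(1)] ends_V[OF c(1)] by auto
    qed
    have stepj: "cedge G j u \<in> gE G \<and> u \<in> gends G (cedge G j u) \<and> gcol G (cedge G j u) = j
       \<and> white_end G black (cedge G j u) = u
       \<and> black_end G black (cedge G j u) \<in> B"
      if "u \<in> gV G" "\<not> black u" for u
    proof -
      have c: "cedge G j u \<in> gE G" "u \<in> gends G (cedge G j u)" "gcol G (cedge G j u) = j"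
        using cedge[OF that(1) jq] by auto
      show ?thesis using c we_eq[OF c(1,2) that(2)] be[OF c(1)] ends_V[OF c(1)] B_def by auto
    qed
    have tauB: "\<forall>v\<in>B. tau v \<in> B"
      using stepi stepj tau_def by auto
    have tau_inj: "inj_on tau B"
    proof (rule inj_onI)
      fix v v' assume v: "v \<in> B" "v' \<in> B" and eq: "tau v = tau v'"
      define u where "u = white_end G black (cedge G i v)"
      define u' where "u' = white_end G black (cedge G i v')"
      have si: "cedge G i v \<in> gE G" "v \<in> gends G (cedge G i v)" "gcol G (cedge G i v) = i"
        "black_end G black (cedge G i v) = v" "u \<in> gV G" "\<not> black u" using stepi[OF v(1)] u_def by auto
      have si': "cedge G i v' \<in> gE G" "v' \<in> gends G (cedge G i v')" "gcol G (cedge G i v') = i"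
        "black_end G black (cedge G i v') = v'" "u' \<in> gV G" "\<not> black u'" using stepi[OF v(2)] u'_def by auto
      have sj: "cedge G j u \<in> gE G" "gcol G (cedge G j u) = j" "white_end G black (cedge G j u) = u"
        using stepj[OF si(5,6)] by auto
      have sj': "cedge G j u' \<in> gE G" "gcol G (cedge G j u') = j" "white_end G black (cedge G j u') = u'"
        using stepj[OF si'(5,6)] by auto
      define t where "t = tau v"
      have t1: "t \<in> gends G (cedge G j u)" using be[OF sj(1)] t_def tau_def u_def by simp
      have t2: "t \<in> gends G (cedge G j u')" using be[OF sj'(1)] t_def eq tau_def u'_def by simp
      have "cedge G j u = cedge G j u'"
        using trans[OF sym[OF cedge_eq[OF sj(1) t1 sj(2)]] cedge_eq[OF sj'(1) t2 sj'(2)]] .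
      then have "u = u'" using sj(3) sj'(3) by metis
      have uin: "u \<in> gends G (cedge G i v)" using we[OF si(1)] u_def by simp
      have uin': "u' \<in> gends G (cedge G i v')" using we[OF si'(1)] u'_def by simp
      have "cedge G i v = cedge G i v'"
        using cedge_eq[OF si(1) uin si(3)] cedge_eq[OF si'(1) uin' si'(3)] \<open>u = u'\<close> by metis
      then show "v = v'" using si(4) si'(4) by metis
    qed
    have finB: "finite B" using fin(1) B_def by simp
    obtain n0 where n0: "n0 > 0" "(tau ^^ n0) b = b" using period[OF finB tauB tau_inj bB] by blast
    define k where "k = (LEAST n. 0 < n \<and> (tau ^^ n) b = b)"
    have k: "0 < k" "(tau ^^ k) b = b" using LeastI[of "\<lambda>n. 0 < n \<and> (tau ^^ n) b = b", OF conjI[OF n0]]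
      unfolding k_def by auto
    have kmin: "(tau ^^ m) b \<noteq> b" if "0 < m" "m < k" for m
      using not_less_Least[of m "\<lambda>n. 0 < n \<and> (tau ^^ n) b = b"] that unfolding k_def by auto
    define bb where "bb l = (tau ^^ l) b" for l
    define ww where "ww l = white_end G black (cedge G i (bb l))" for l
    define pw where "pw l = black_end G black (Z (ww l))" for l
    have bbB: "bb l \<in> B" for l using funpow_in[OF tauB bB] bb_def by simp
    have bbSuc: "bb (Suc l) = black_end G black (cedge G j (ww l))" for l
      by (simp add: bb_def ww_def tau_def)
    have bbV: "bb l \<in> gV G" "black (bb l)" for l using bbB B_def by auto
    have I: "cedge G i (bb l) \<in> gE G" "bb l \<in> gends G (cedge G i (bb l))" "gcol G (cedge G i (bb l)) = i"
      "black_end G black (cedge G i (bb l)) = bb l" "ww l \<in> gV G" "\<not> black (ww l)" for l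
      using stepi[OF bbB[of l]] ww_def by auto
    have wwin: "ww l \<in> gends G (cedge G i (bb l))" for l using we[OF I(1)] ww_def by simp
    have J: "cedge G j (ww l) \<in> gE G" "ww l \<in> gends G (cedge G j (ww l))" "gcol G (cedge G j (ww l)) = j"
      "white_end G black (cedge G j (ww l)) = ww l" for l
      using stepj[OF I(5,6)] by auto
    have bbin: "bb (Suc l) \<in> gends G (cedge G j (ww l))" for l using be[OF J(1)] bbSuc by simp
    have Jb: "cedge G j (bb (Suc l)) = cedge G j (ww l)" for l
      using cedge_eq[OF J(1) bbin J(3)] .
    have ends_I: "gends G (cedge G i (bb l)) = {bb l, ww l}" for l
      using ends_bw[OF I(1)] I(4) ww_def by simp
    have ends_J: "gends G (cedge G j (ww l)) = {bb (Suc l), ww l}" for l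
      using ends_bw[OF J(1)] J(4) bbSuc by simp
    have R1: "(bb l, ww l) \<in> R" for l
      unfolding R_def by (rule adjI[OF I(1)]) (simp_all add: I(3) ends_I)
    have R2: "(ww l, bb (Suc l)) \<in> R" for l
      unfolding R_def by (rule adjI[OF J(1)]) (auto simp add: J(3) ends_J)
    have reach: "(b, bb l) \<in> R\<^sup>*" for l
    proof (induction l)
      case 0 then show ?case by (simp add: bb_def)
    next
      case (Suc l)
      then show ?case using R1[of l] R2[of l] by (meson rtrancl_into_rtrancl)
    qed
    have ww_ne: "ww l \<noteq> w" for l
      using reach[of l] R1[of l] nbw by (metis rtrancl_into_rtrancl)
    have ZW: "Z (ww l) \<in> gE G" "ww l \<in> gends G (Z (ww l))" "gcol G (Z (ww l)) = 0" for l
      using Zp[OF I(5)] by auto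
    have P: "pw l \<in> gends G (Z (ww l))" "black (pw l)" "pw l \<in> gV G" for l
      using be[OF ZW(1)] pw_def ends_V[OF ZW(1)] by auto
    have Zpw: "Z (pw l) = Z (ww l)" for l using Zeq[OF ZW(1) P(1) ZW(3)] .
    have PI: "cedge G i (pw l) \<in> gE G" "pw l \<in> gends G (cedge G i (pw l))" "gcol G (cedge G i (pw l)) = i" for l
      using cedge[OF P(3) iq] by auto
    have PJ: "cedge G j (pw l) \<in> gE G" "pw l \<in> gends G (cedge G j (pw l))" "gcol G (cedge G j (pw l)) = j" for l
      using cedge[OF P(3) jq] by auto
    have PIb: "black_end G black (cedge G i (pw l)) = pw l" for l using be_eq[OF PI(1,2) P(2)] .
    have PJb: "black_end G black (cedge G j (pw l)) = pw l" for l using be_eq[OF PJ(1,2) P(2)] .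
    have arcI: "(Z (bb l), Z (ww l)) \<in> contr_arcs G black i" for l
      unfolding contr_arcs_def Z_def
      by (rule CollectI, rule exI[of _ "cedge G i (bb l)"]) (use I(1,3,4)[of l] ww_def in simp)
    have arcJ: "(Z (bb (Suc l)), Z (ww l)) \<in> contr_arcs G black j" for l
      unfolding contr_arcs_def Z_def
      by (rule CollectI, rule exI[of _ "cedge G j (ww l)"]) (use J(1,3,4)[of l] bbSuc[of l] in simp)
    have CCI: "CC i (Z (ww l)) = CC i (Z (bb l))" for l using cyc_eq[OF iq arcI] CC_def by simp
    have CCJ: "CC j (Z (bb (Suc l))) = CC j (Z (ww l))" for l using cyc_eq[OF jq arcJ] CC_def by simp
    define xx where "xx l r = (if r = (0::nat) then Inl (Z (bb l)) else if r = 1 then Inr (i, CC i (Z (bb l)))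
      else if r = 2 then Inl (Z (ww l)) else Inr (j, CC j (Z (ww l))))" for l r
    define ee where "ee l r = (if r = (0::nat) then cedge G i (bb l) else if r = 1 then cedge G i (pw l)
      else if r = 2 then cedge G j (pw l) else cedge G j (bb (Suc l)))" for l r
    define x where "x m = xx (m div 4) (m mod 4)" for m
    define e where "e m = ee (m div 4) (m mod 4)" for m
    define n where "n = 4 * k"
    have psub: "g \<in> psi_sub_edges q G i j" if "g \<in> gE G" "gcol G g = i \<or> gcol G g = j" for g
      using that assms(3-6) unfolding psi_sub_edges_def psi_edges_def by auto
    have pe: "psi_ends G black g = {Inl (Z (black_end G black g)),
        Inr (gcol G g, CC (gcol G g) (Z (black_end G black g)))}" for g
      by (simp add: psi_ends_eq Z_def CC_def)
    have bb0: "bb 0 = b" by (simp add: bb_def)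
    have bbk: "bb k = b" using k(2) bb_def by simp
    have x0: "x 0 = Inl (Z b)" by (simp add: x_def xx_def bb0)
    have Zb: "Z b = f" using Zeq[OF fE fB(1) f0] .
    have C1: "\<forall>m<n. e m \<in> psi_sub_edges q G i j \<and> psi_ends G black (e m) = {x m, x (Suc m mod n)}"
    proof (intro allI impI)
      fix m assume m: "m < n"
      define l where "l = m div 4"
      define r where "r = m mod 4"
      have mlr: "m = 4 * l + r" "r < 4" using l_def r_def by auto
      have lk: "l < k" using m mlr n_def by linarith
      have xm: "x m = xx l r" "e m = ee l r" using x_def e_def l_def r_def by auto
      have nxt: "x (Suc m mod n) = (if r < 3 then xx l (Suc r) else Inl (Z (bb (Suc l))))"
      proof (cases "r < 3")
        case True
        then have "Suc m < n" using mlr lk n_def by linarith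
        then have "Suc m mod n = Suc m" by simp
        moreover have "Suc m div 4 = l" "Suc m mod 4 = Suc r" using mlr True by presburger+
        ultimately show ?thesis using True by (simp add: x_def)
      next
        case False
        then have r3: "r = 3" using mlr by simp
        show ?thesis
        proof (cases "Suc l < k")
          case True
          then have "Suc m < n" using mlr r3 n_def by linarith
          then have "Suc m mod n = Suc m" by simp
          moreover have "Suc m div 4 = Suc l" "Suc m mod 4 = 0" using mlr r3 by presburger+
          ultimately show ?thesis using r3 by (simp add: x_def xx_def)
        next
          case False
          then have slk: "Suc l = k" using lk by simp
          then have "Suc m = n" using mlr r3 n_def by linarith
          then have "Suc m mod n = 0" by simp
          then show ?thesis using r3 x0 bbk slk by simp
        qed
      qed
      have "r = 0 \<or> r = 1 \<or> r = 2 \<or> r = 3" using mlr by auto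
      then show "e m \<in> psi_sub_edges q G i j \<and> psi_ends G black (e m) = {x m, x (Suc m mod n)}"
      proof (elim disjE)
        assume r: "r = 0"
        have em: "e m = cedge G i (bb l)" using r xm by (simp add: ee_def)
        have "psi_ends G black (cedge G i (bb l)) = {Inl (Z (bb l)), Inr (i, CC i (Z (bb l)))}"
          using pe[of "cedge G i (bb l)"] I(3,4)[of l] by simp
        moreover have "x m = Inl (Z (bb l))" "x (Suc m mod n) = Inr (i, CC i (Z (bb l)))"
          using r xm nxt by (simp_all add: xx_def)
        ultimately show ?thesis using em psub[OF I(1)] I(3) by simp
      next
        assume r: "r = 1"
        have em: "e m = cedge G i (pw l)" using r xm by (simp add: ee_def)
        have "psi_ends G black (cedge G i (pw l)) = {Inl (Z (ww l)), Inr (i, CC i (Z (bb l)))}"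
          using pe[of "cedge G i (pw l)"] PI(3)[of l] PIb[of l] Zpw[of l] CCI[of l] by simp
        moreover have "x m = Inr (i, CC i (Z (bb l)))" "x (Suc m mod n) = Inl (Z (ww l))"
          using r xm nxt by (simp_all add: xx_def)
        ultimately show ?thesis using em psub[OF PI(1)] PI(3) by (simp add: insert_commute)
      next
        assume r: "r = 2"
        have em: "e m = cedge G j (pw l)" using r xm by (simp add: ee_def)
        have "psi_ends G black (cedge G j (pw l)) = {Inl (Z (ww l)), Inr (j, CC j (Z (ww l)))}"
          using pe[of "cedge G j (pw l)"] PJ(3)[of l] PJb[of l] Zpw[of l] by simp
        moreover have "x m = Inl (Z (ww l))" "x (Suc m mod n) = Inr (j, CC j (Z (ww l)))"
          using r xm nxt by (simp_all add: xx_def)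
        ultimately show ?thesis using em psub[OF PJ(1)] PJ(3) by simp
      next
        assume r: "r = 3"
        have em: "e m = cedge G j (ww l)" using r xm Jb[of l] by (simp add: ee_def)
        have be1: "black_end G black (cedge G j (ww l)) = bb (Suc l)" using bbSuc[of l] by simp
        have "psi_ends G black (cedge G j (ww l)) = {Inl (Z (bb (Suc l))), Inr (j, CC j (Z (ww l)))}"
          using pe[of "cedge G j (ww l)"] J(3)[of l] be1 CCJ[of l] by simp
        moreover have "x m = Inr (j, CC j (Z (ww l)))" "x (Suc m mod n) = Inl (Z (bb (Suc l)))"
          using r xm nxt by (simp_all add: xx_def)
        ultimately show ?thesis using em psub[OF J(1)] J(3) by (simp add: insert_commute)
      qed
    qed
    have C2: "\<forall>m. 0 < m \<and> m < n \<longrightarrow> x m \<noteq> x 0"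
    proof (intro allI impI)
      fix m assume m: "0 < m \<and> m < n"
      define l where "l = m div 4"
      define r where "r = m mod 4"
      have mlr: "m = 4 * l + r" "r < 4" using l_def r_def by auto
      have lk: "l < k" using m mlr n_def by linarith
      have xm: "x m = xx l r" using x_def l_def r_def by auto
      have "r = 0 \<or> r = 1 \<or> r = 2 \<or> r = 3" using mlr by auto
      then show "x m \<noteq> x 0"
      proof (elim disjE)
        assume r: "r = 0"
        then have l0: "0 < l" using m mlr by simp
        show ?thesis
        proof
          assume "x m = x 0"
          then have "Z (bb l) = f" using r xm x0 Zb by (simp add: xx_def)
          then have "bb l \<in> gends G f" using Zp[OF bbV(1)[of l]] by metis
          then have "bb l = b" using be_eq[OF fE _ bbV(2)] b_def by simp
          then show False using kmin[OF l0 lk] bb_def by simp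
        qed
      next
        assume r: "r = 2"
        show ?thesis
        proof
          assume "x m = x 0"
          then have "Z (ww l) = f" using r xm x0 Zb by (simp add: xx_def)
          then have "ww l \<in> gends G f" using ZW(2)[of l] by metis
          then have "ww l = w" using we_eq[OF fE _ I(6)] w_def by simp
          then show False using ww_ne by simp
        qed
      qed (use xm x0 in \<open>simp_all add: xx_def\<close>)
    qed
    have C3: "e 0 \<noteq> e (n - 1)"
    proof -
      obtain k' where k': "k = Suc k'" using k(1) by (cases k) auto
      have n1: "n - 1 = 4 * k' + 3" using k' n_def by simp
      have "(4 * k' + 3) div 4 = k'" "(4 * k' + 3) mod 4 = (3::nat)" by simp_all
      then have "e (n - 1) = cedge G j (bb (Suc k'))" using n1 by (simp add: e_def ee_def)
      then have "e (n - 1) = cedge G j (ww k')" using Jb[of k'] by simp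
      then have "gcol G (e (n - 1)) = j" using J(3) by simp
      moreover have "gcol G (e 0) = i" using I(3)[of 0] by (simp add: e_def ee_def)
      ultimately show ?thesis using assms(7) by metis
    qed
    have "has_cycle (psi_sub_edges q G i j) (psi_ends G black)"
      by (rule walk_cycle[OF C1 C2 C3])
    then show False using assms(8) by (simp add: is_forest_def)
  qed
  have "gends G f = {b, w}" using ends_bw[OF fE] b_def w_def by simp
  then show "(u, v) \<in> (adj_rel G {i, j})\<^sup>*"
    using uv main symR unfolding R_def[symmetric] by (auto dest: symD)
qed

end
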